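(* For every $\omega\in\mathcal{B}(\mathcal{H})_*$, $$S\bigl((\omega\otimes\mathrm{id})(U_A)\bigr)=(\omega\otimes\mathrm{id})(U_A^* ).$$ Explicitly, if $\xi,\eta\in\mathcal{H}$ and $(\omega_{\xi,\eta}\otimes\mathrm{id})(U_A)=L_f$, then $(\omega_{\xi,\eta}\otimes\mathrm{id})(U_A^* )=L_{Sf}$ with $(Sf)(x,y,r)=(e^{2\lambda r})^n\,\bar e[\eta_\lambda(r)\beta(x,y)]\,f(-e^{\lambda r}x,-e^{\lambda r}y,-r)$.
   Context: Fix an integer $n\ge1$ and a real constant $\lambda\neq0$. Points of $\mathbb{R}^{2n+1}$ are written $(x,y,r)$ with $x,y\in\mathbb{R}^n$, $r\in\mathbb{R}$; $\beta$ is the standard inner product on $\mathbb{R}^n$, $\bar e(t)=e^{-2\pi i t}$, $\eta_\lambda(r)=\frac{e^{2\lambda r}-1}{2\lambda}$, $\mathcal{H}=L^2(\mathbb{R}^{2n+1})$, $\mathcal{B}(\mathcal{H})_*$ the predual of $\mathcal{B}(\mathcal{H})$, $\omega_{\xi,\eta}(T)=\langle T\xi,\eta\rangle$. For $f$ in $L^1$-type function classes (in particular Schwartz functions with compact $r$-support), $L_f\in\mathcal{B}(\mathcal{H})$ is $(L_f\zeta)(x,y,r)=\int f(\tilde x,\tilde y,r)\zeta(x-\tilde x,y-\tilde y,r)\bar e[\eta_\lambda(r)\beta(\tilde x,y-\tilde y)]\,d\tilde x\,d\tilde y$, and $A$ is the norm closure of such $L_f$. $U_A$ is the unitary on $\mathcal{H}\otimes\mathcal{H}$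 given by $U_A\xi(x,y,r,x',y',r')=(e^{-\lambda r'})^n\bar e[\eta_\lambda(r')\beta(e^{-\lambda r'}x,y'-e^{-\lambda r'}y)]\,\xi(e^{-\lambda r'}x,e^{-\lambda r'}y,r+r',x'-e^{-\lambda r'}x,y'-e^{-\lambda r'}y,r')$; one has $(\omega\otimes\mathrm{id})(U_A)\in A$. $S$ is the anti-automorphism of $A$ given by $S(a)=\hat Ja^*\hat J$, where $\hat J\xi(x,y,r)=(e^{\lambda r})^n\overline{\xi(e^{\lambda r}x,e^{\lambda r}y,-r)}$. *)

theory Defs
  imports "HOL-Analysis.Analysis"
begin

text \<open>Points of R^(2n+1) are triples (x,y,r) with x,y in real^'n (n = CARD('n)).
  Elements of H = L^2(R^(2n+1)) are represented by square-integrable functions.\<close>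

type_synonym 'n pt = "(real^'n) \<times> (real^'n) \<times> real"

definition ebar :: "real \<Rightarrow> complex" where
  "ebar t = cis (- 2 * pi * t)"

definition eta_lam :: "real \<Rightarrow> real \<Rightarrow> real" where
  "eta_lam lam r = (exp (2 * lam * r) - 1) / (2 * lam)"

definition beta :: "real^('n::finite) \<Rightarrow> real^'n \<Rightarrow> real" where
  "beta x y = x \<bullet> y"

definition L2 :: "('a::euclidean_space \<Rightarrow> complex) \<Rightarrow> bool" where
  "L2 f \<longleftrightarrow> f \<in> borel_measurable lborel \<and> integrable lborel (\<lambda>p. (cmod (f p))^2)"

definition L2norm :: "('a::euclidean_space \<Rightarrow> complex) \<Rightarrow> real" where
  "L2norm f = sqrt (integral\<^sup>L lborel (\<lambda>p. (cmod (f p))^2))"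

text \<open>Inner product of L^2 (linear in the first variable).\<close>
definition ip :: "('a::euclidean_space \<Rightarrow> complex) \<Rightarrow> ('a \<Rightarrow> complex) \<Rightarrow> complex" where
  "ip f g = integral\<^sup>L lborel (\<lambda>p. f p * cnj (g p))"

definition tensor :: "('a \<Rightarrow> complex) \<Rightarrow> ('b \<Rightarrow> complex) \<Rightarrow> ('a \<times> 'b \<Rightarrow> complex)" where
  "tensor f g = (\<lambda>(p, q). f p * g q)"

definition UA :: "real \<Rightarrow> (('n::finite) pt \<times> ('n::finite) pt \<Rightarrow> complex) \<Rightarrow> (('n::finite) pt \<times> ('n::finite) pt \<Rightarrow> complex)" where
  "UA lam \<xi> = (\<lambda>((x, y, r), (x', y', r')).
     let e = exp (- lam * r') in
       complex_of_real (e ^ CARD('n))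
       * ebar (eta_lam lam r' * beta (e *\<^sub>R x) (y' - e *\<^sub>R y))
       * \<xi> ((e *\<^sub>R x, e *\<^sub>R y, r + r'), (x' - e *\<^sub>R x, y' - e *\<^sub>R y, r')))"

definition Jhat :: "real \<Rightarrow> (('n::finite) pt \<Rightarrow> complex) \<Rightarrow> (('n::finite) pt \<Rightarrow> complex)" where
  "Jhat lam \<xi> = (\<lambda>(x, y, r).
     let e = exp (lam * r) in
       complex_of_real (e ^ CARD('n)) * cnj (\<xi> (e *\<^sub>R x, e *\<^sub>R y, - r)))"

definition Lf :: "real \<Rightarrow> (('n::finite) pt \<Rightarrow> complex) \<Rightarrow> (('n::finite) pt \<Rightarrow> complex) \<Rightarrow> (('n::finite) pt \<Rightarrow> complex)" where
  "Lf lam f \<zeta> = (\<lambda>(x, y, r).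
     integral\<^sup>L (lborel :: ((real^'n) \<times> (real^'n)) measure)
       (\<lambda>(xt, yt). f (xt, yt, r) * \<zeta> (x - xt, y - yt, r)
                    * ebar (eta_lam lam r * beta xt (y - yt))))"

text \<open>L^1-type class of functions f: measurable, f(.,.,r) integrable for every r,
  with L^1(R^2n)-norm bounded uniformly in r (contains the Schwartz functions with
  compact r-support).\<close>
definition L1type :: "(('n::finite) pt \<Rightarrow> complex) \<Rightarrow> bool" where
  "L1type f \<longleftrightarrow> f \<in> borel_measurable lborel
     \<and> (\<forall>r. integrable (lborel :: ((real^'n) \<times> (real^'n)) measure) (\<lambda>(a, b). f (a, b, r)))
     \<and> (\<exists>C. \<forall>r. integral\<^sup>L (lborel :: ((real^'n) \<times> (real^'n)) measure)
                     (\<lambda>(a, b). cmod (f (a, b, r))) \<le> C)"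

definition Sfun :: "real \<Rightarrow> (('n::finite) pt \<Rightarrow> complex) \<Rightarrow> (('n::finite) pt \<Rightarrow> complex)" where
  "Sfun lam f = (\<lambda>(x, y, r).
     complex_of_real ((exp (2 * lam * r)) ^ CARD('n))
     * ebar (eta_lam lam r * beta x y)
     * f (- (exp (lam * r) *\<^sub>R x), - (exp (lam * r) *\<^sub>R y), - r))"

text \<open>Normal functionals on B(H): omega = sum_k omega_{xi_k, eta_k} with
  sum_k ||xi_k|| ||eta_k|| < infinity.\<close>
definition normal_rep :: "(nat \<Rightarrow> (('n::finite) pt \<Rightarrow> complex)) \<Rightarrow> (nat \<Rightarrow> (('n::finite) pt \<Rightarrow> complex)) \<Rightarrow> bool" where
  "normal_rep \<xi>s \<eta>s \<longleftrightarrow> (\<forall>k. L2 (\<xi>s k) \<and> L2 (\<eta>s k))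
     \<and> summable (\<lambda>k. L2norm (\<xi>s k) * L2norm (\<eta>s k))"

text \<open>X = (omega (x) id)(U_A), weakly: <X z, z'> = sum_k <U_A(xi_k (x) z), eta_k (x) z'>.\<close>
definition slice_UA :: "real \<Rightarrow> (nat \<Rightarrow> (('n::finite) pt \<Rightarrow> complex)) \<Rightarrow> (nat \<Rightarrow> (('n::finite) pt \<Rightarrow> complex))
    \<Rightarrow> ((('n::finite) pt \<Rightarrow> complex) \<Rightarrow> (('n::finite) pt \<Rightarrow> complex)) \<Rightarrow> bool" where
  "slice_UA lam \<xi>s \<eta>s X \<longleftrightarrow> (\<forall>\<zeta>. L2 \<zeta> \<longrightarrow> L2 (X \<zeta>))
     \<and> (\<forall>\<zeta> \<zeta>'. L2 \<zeta> \<longrightarrow> L2 \<zeta>' \<longrightarrow>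
          ip (X \<zeta>) \<zeta>' = (\<Sum>k. ip (UA lam (tensor (\<xi>s k) \<zeta>)) (tensor (\<eta>s k) \<zeta>')))"

text \<open>Y = (omega (x) id)(U_A^*), weakly:
  <Y z, z'> = sum_k <U_A^*(xi_k (x) z), eta_k (x) z'> = sum_k <xi_k (x) z, U_A(eta_k (x) z')>.\<close>
definition slice_UA_adj :: "real \<Rightarrow> (nat \<Rightarrow> (('n::finite) pt \<Rightarrow> complex)) \<Rightarrow> (nat \<Rightarrow> (('n::finite) pt \<Rightarrow> complex))
    \<Rightarrow> ((('n::finite) pt \<Rightarrow> complex) \<Rightarrow> (('n::finite) pt \<Rightarrow> complex)) \<Rightarrow> bool" where
  "slice_UA_adj lam \<xi>s \<eta>s Y \<longleftrightarrow> (\<forall>\<zeta>. L2 \<zeta> \<longrightarrow> L2 (Y \<zeta>))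
     \<and> (\<forall>\<zeta> \<zeta>'. L2 \<zeta> \<longrightarrow> L2 \<zeta>' \<longrightarrow>
          ip (Y \<zeta>) \<zeta>' = (\<Sum>k. ip (tensor (\<xi>s k) \<zeta>) (UA lam (tensor (\<eta>s k) \<zeta>'))))"

definition is_adjoint :: "((('n::finite) pt \<Rightarrow> complex) \<Rightarrow> (('n::finite) pt \<Rightarrow> complex))
    \<Rightarrow> ((('n::finite) pt \<Rightarrow> complex) \<Rightarrow> (('n::finite) pt \<Rightarrow> complex)) \<Rightarrow> bool" where
  "is_adjoint X Xs \<longleftrightarrow> (\<forall>\<zeta>. L2 \<zeta> \<longrightarrow> L2 (Xs \<zeta>))
     \<and> (\<forall>\<zeta> \<zeta>'. L2 \<zeta> \<longrightarrow> L2 \<zeta>' \<longrightarrow> ip (Xs \<zeta>) \<zeta>' = ip \<zeta> (X \<zeta>'))"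

end

theory Submission
  imports Defs
begin


lemma measurable_pair_borel[measurable (raw)]:
  "f \<in> M \<rightarrow>\<^sub>M (borel :: 'a::second_countable_topology measure) \<Longrightarrow> g \<in> M \<rightarrow>\<^sub>M (borel :: 'b::second_countable_topology measure)
   \<Longrightarrow> (\<lambda>x. (f x, g x)) \<in> M \<rightarrow>\<^sub>M (borel :: ('a \<times> 'b) measure)"
  unfolding borel_prod[symmetric] by measurable

lemma measurable_fst_borel[measurable]:
  "fst \<in> (borel :: ('a::second_countable_topology \<times> 'b::second_countable_topology) measure) \<rightarrow>\<^sub>M borel"
  unfolding borel_prod[symmetric] by measurable

lemma measurable_snd_borel[measurable]:
  "snd \<in> (borel :: ('a::second_countable_topology \<times> 'b::second_countable_topology) measure) \<rightarrow>\<^sub>M borel"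
  unfolding borel_prod[symmetric] by measurable

lemma measurable_fst_borel'[measurable (raw)]:
  "f \<in> M \<rightarrow>\<^sub>M (borel :: ('a::second_countable_topology \<times> 'b::second_countable_topology) measure)
   \<Longrightarrow> (\<lambda>x. fst (f x)) \<in> M \<rightarrow>\<^sub>M borel"
  using measurable_compose[OF _ measurable_fst_borel] by blast

lemma measurable_snd_borel'[measurable (raw)]:
  "f \<in> M \<rightarrow>\<^sub>M (borel :: ('a::second_countable_topology \<times> 'b::second_countable_topology) measure)
   \<Longrightarrow> (\<lambda>x. snd (f x)) \<in> M \<rightarrow>\<^sub>M borel"
  using measurable_compose[OF _ measurable_snd_borel] by blast

lemma measurable_cnj[measurable (raw)]:
  "f \<in> M \<rightarrow>\<^sub>M (borel :: complex measure) \<Longrightarrow> (\<lambda>x. cnj (f x)) \<in> M \<rightarrow>\<^sub>M borel"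
  using measurable_compose[OF _ borel_measurable_continuous_onI[OF continuous_on_cnj[OF continuous_on_id]]] by blast

definition cv :: "('a::euclidean_space \<Rightarrow> 'a) \<Rightarrow> ('a \<Rightarrow> real) \<Rightarrow> bool" where
  "cv \<Phi> j \<longleftrightarrow> \<Phi> \<in> borel_measurable borel \<and> j \<in> borel_measurable borel \<and> (\<forall>z. 0 \<le> j z)
     \<and> (\<forall>f::'a \<Rightarrow> ennreal. f \<in> borel_measurable borel \<longrightarrow>
          (\<integral>\<^sup>+z. ennreal (j z) * f (\<Phi> z) \<partial>lborel) = (\<integral>\<^sup>+z. f z \<partial>lborel))"

lemma cv_nn:
  assumes "cv \<Phi> j" "f \<in> borel_measurable borel"
  shows "(\<integral>\<^sup>+z. ennreal (j z) * f (\<Phi> z) \<partial>lborel) = (\<integral>\<^sup>+z. f z \<partial>lborel)"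
  using assms unfolding cv_def by blast

lemma cv_meas:
  assumes "cv \<Phi> j"
  shows "\<Phi> \<in> borel_measurable borel" "j \<in> borel_measurable borel" "0 \<le> j z"
  using assms unfolding cv_def by blast+

lemma cv_distr:
  assumes "cv \<Phi> j"
  shows "distr (density lborel j) lborel \<Phi> = lborel"
proof (rule measure_eqI)
  show "sets (distr (density lborel j) lborel \<Phi>) = sets lborel" by simp
  fix A assume A: "A \<in> sets (distr (density lborel j) lborel \<Phi>)"
  have m: "\<Phi> \<in> borel_measurable borel" "j \<in> borel_measurable borel" "\<forall>f::'a \<Rightarrow> ennreal. f \<in> borel_measurable borel \<longrightarrow>
          (\<integral>\<^sup>+z. ennreal (j z) * f (\<Phi> z) \<partial>lborel) = (\<integral>\<^sup>+z. f z \<partial>lborel)"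
    using assms unfolding cv_def by auto
  have Am: "A \<in> sets borel" using A by simp
  have "emeasure (distr (density lborel j) lborel \<Phi>) A = emeasure (density lborel j) (\<Phi> -` A)"
    using A m measurable_sets_borel[OF m(1) Am] by (subst emeasure_distr) auto
  also have "\<dots> = (\<integral>\<^sup>+z. ennreal (j z) * indicator (\<Phi> -` A) z \<partial>lborel)"
    using m Am measurable_sets_borel[OF m(1) Am] by (subst emeasure_density) (auto intro: nn_integral_cong)
  also have "\<dots> = (\<integral>\<^sup>+z. ennreal (j z) * indicator A (\<Phi> z) \<partial>lborel)"
    by (auto intro!: nn_integral_cong split: split_indicator)
  also have "\<dots> = (\<integral>\<^sup>+z. indicator A z \<partial>lborel)"
    using m(3) Am by auto
  also have "\<dots> = emeasure lborel A" using Am by simp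
  finally show "emeasure (distr (density lborel j) lborel \<Phi>) A = emeasure lborel A" .
qed

lemma cv_integral:
  fixes g :: "'a::euclidean_space \<Rightarrow> 'b::{banach, second_countable_topology}"
  assumes "cv \<Phi> j" and g: "g \<in> borel_measurable borel"
  shows "integral\<^sup>L lborel g = integral\<^sup>L lborel (\<lambda>z. j z *\<^sub>R g (\<Phi> z))"
    and "integrable lborel g \<longleftrightarrow> integrable lborel (\<lambda>z. j z *\<^sub>R g (\<Phi> z))"
proof -
  have m: "\<Phi> \<in> borel_measurable borel" "j \<in> borel_measurable borel" "\<forall>z. 0 \<le> j z"
    using assms unfolding cv_def by auto
  have "integral\<^sup>L lborel g = integral\<^sup>L (distr (density lborel j) lborel \<Phi>) g"
    using cv_distr[OF assms(1)] by simp
  also have "\<dots> = integral\<^sup>L (density lborel j) (\<lambda>z. g (\<Phi> z))"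
    using m g by (subst integral_distr) auto
  also have "\<dots> = integral\<^sup>L lborel (\<lambda>z. j z *\<^sub>R g (\<Phi> z))"
    using m g by (subst integral_density) auto
  finally show "integral\<^sup>L lborel g = integral\<^sup>L lborel (\<lambda>z. j z *\<^sub>R g (\<Phi> z))" .
  have "integrable lborel g \<longleftrightarrow> integrable (distr (density lborel j) lborel \<Phi>) g"
    using cv_distr[OF assms(1)] by simp
  also have "\<dots> \<longleftrightarrow> integrable (density lborel j) (\<lambda>z. g (\<Phi> z))"
    using m g by (subst integrable_distr_eq) auto
  also have "\<dots> \<longleftrightarrow> integrable lborel (\<lambda>z. j z *\<^sub>R g (\<Phi> z))"
    using m g by (subst integrable_density) auto
  finally show "integrable lborel g \<longleftrightarrow> integrable lborel (\<lambda>z. j z *\<^sub>R g (\<Phi> z))" .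
qed

lemma cv_comp:
  assumes "cv \<Phi>1 j1" "cv \<Phi>2 j2"
  shows "cv (\<lambda>z. \<Phi>1 (\<Phi>2 z)) (\<lambda>z. j2 z * j1 (\<Phi>2 z))"
proof -
  have m1: "\<Phi>1 \<in> borel_measurable borel" "j1 \<in> borel_measurable borel" "\<forall>z. 0 \<le> j1 z" "\<forall>f::'a \<Rightarrow> ennreal. f \<in> borel_measurable borel \<longrightarrow>
          (\<integral>\<^sup>+z. ennreal (j1 z) * f (\<Phi>1 z) \<partial>lborel) = (\<integral>\<^sup>+z. f z \<partial>lborel)"
    using assms unfolding cv_def by auto
  have m2: "\<Phi>2 \<in> borel_measurable borel" "j2 \<in> borel_measurable borel" "\<forall>z. 0 \<le> j2 z" "\<forall>f::'a \<Rightarrow> ennreal. f \<in> borel_measurable borel \<longrightarrow>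
          (\<integral>\<^sup>+z. ennreal (j2 z) * f (\<Phi>2 z) \<partial>lborel) = (\<integral>\<^sup>+z. f z \<partial>lborel)"
    using assms unfolding cv_def by auto
  note [measurable] = m1(1,2) m2(1,2)
  show ?thesis unfolding cv_def
  proof (intro conjI allI impI)
    show "(\<lambda>z. \<Phi>1 (\<Phi>2 z)) \<in> borel_measurable borel" by measurable
    show "(\<lambda>z. j2 z * j1 (\<Phi>2 z)) \<in> borel_measurable borel" by measurable
    show "0 \<le> j2 z * j1 (\<Phi>2 z)" for z using m1 m2 by simp
    fix f :: "'a \<Rightarrow> ennreal" assume [measurable]: "f \<in> borel_measurable borel"
    have "(\<integral>\<^sup>+z. ennreal (j2 z * j1 (\<Phi>2 z)) * f (\<Phi>1 (\<Phi>2 z)) \<partial>lborel)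
        = (\<integral>\<^sup>+z. ennreal (j2 z) * (ennreal (j1 (\<Phi>2 z)) * f (\<Phi>1 (\<Phi>2 z))) \<partial>lborel)"
      using m1 m2 by (intro nn_integral_cong) (simp add: ennreal_mult mult.assoc)
    also have "\<dots> = (\<integral>\<^sup>+z. ennreal (j1 z) * f (\<Phi>1 z) \<partial>lborel)"
      using m2(4)[rule_format, of "\<lambda>z. ennreal (j1 z) * f (\<Phi>1 z)"] by simp
    also have "\<dots> = (\<integral>\<^sup>+z. f z \<partial>lborel)" using m1(4) by simp
    finally show "(\<integral>\<^sup>+z. ennreal (j2 z * j1 (\<Phi>2 z)) * f (\<Phi>1 (\<Phi>2 z)) \<partial>lborel) = (\<integral>\<^sup>+z. f z \<partial>lborel)" .
  qed
qed

lemma cv_affine: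
  fixes t :: "'a::euclidean_space"
  assumes "c \<noteq> 0"
  shows "cv (\<lambda>x. t + c *\<^sub>R x) (\<lambda>_. \<bar>c\<bar>^DIM('a))"
  unfolding cv_def
proof (intro conjI allI impI)
  show "(\<lambda>x. t + c *\<^sub>R x) \<in> borel_measurable borel" by measurable
  show "(\<lambda>_. \<bar>c\<bar>^DIM('a)) \<in> borel_measurable borel" by simp
  show "0 \<le> \<bar>c\<bar>^DIM('a)" for z :: 'a by simp
  fix f :: "'a \<Rightarrow> ennreal" assume [measurable]: "f \<in> borel_measurable borel"
  show "(\<integral>\<^sup>+z. ennreal (\<bar>c\<bar>^DIM('a)) * f (t + c *\<^sub>R z) \<partial>lborel) = (\<integral>\<^sup>+z. f z \<partial>lborel)"
    by (subst (2) lborel_affine[OF assms, of t])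
       (simp add: nn_integral_density nn_integral_distr)
qed

lemma cv_pl1:
  fixes \<phi> :: "'b::euclidean_space \<Rightarrow> 'a::euclidean_space \<Rightarrow> 'a"
  assumes cv: "\<And>b. cv (\<phi> b) (j b)"
    and m1: "(\<lambda>(a,b). \<phi> b a) \<in> borel_measurable borel"
    and m2: "(\<lambda>(a,b). j b a) \<in> borel_measurable borel"
  shows "cv (\<lambda>(a,b). (\<phi> b a, b)) (\<lambda>(a,b). j b a)"
  unfolding cv_def
proof (intro conjI allI impI)
  have m1': "(\<lambda>x. \<phi> (snd x) (fst x)) \<in> borel_measurable borel" using m1 by (simp add: case_prod_beta')
  have m2': "(\<lambda>x. j (snd x) (fst x)) \<in> borel_measurable borel" using m2 by (simp add: case_prod_beta')
  note [measurable] = m1' m2'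
  show "(\<lambda>(a,b). (\<phi> b a, b)) \<in> borel_measurable borel"
    unfolding case_prod_beta' by measurable
  show "(\<lambda>(a,b). j b a) \<in> borel_measurable borel" by (rule m2)
  show "0 \<le> (case z of (a, b) \<Rightarrow> j b a)" for z using cv unfolding cv_def by (auto split: prod.split)
  fix f :: "'a \<times> 'b \<Rightarrow> ennreal" assume [measurable]: "f \<in> borel_measurable borel"
  have "(\<integral>\<^sup>+z. ennreal (case z of (a, b) \<Rightarrow> j b a) * f (case z of (a, b) \<Rightarrow> (\<phi> b a, b)) \<partial>lborel)
     = (\<integral>\<^sup>+z. ennreal (j (snd z) (fst z)) * f (\<phi> (snd z) (fst z), snd z) \<partial>(lborel \<Otimes>\<^sub>M lborel))"
    by (simp add: lborel_prod case_prod_beta')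
  also have "\<dots> = (\<integral>\<^sup>+b. \<integral>\<^sup>+a. ennreal (j b a) * f (\<phi> b a, b) \<partial>lborel \<partial>lborel)"
  proof -
    have "(\<lambda>z. ennreal (j (snd z) (fst z)) * f (\<phi> (snd z) (fst z), snd z)) \<in> borel_measurable (lborel \<Otimes>\<^sub>M lborel)"
      unfolding lborel_prod by measurable
    from lborel_pair.nn_integral_snd[OF this] show ?thesis by simp
  qed
  also have "\<dots> = (\<integral>\<^sup>+b. \<integral>\<^sup>+a. f (a, b) \<partial>lborel \<partial>lborel)"
  proof (rule nn_integral_cong)
    fix b
    have mb: "(\<lambda>a. f (a, b)) \<in> borel_measurable borel" by measurable
    show "(\<integral>\<^sup>+a. ennreal (j b a) * f (\<phi> b a, b) \<partial>lborel) = (\<integral>\<^sup>+a. f (a, b) \<partial>lborel)"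
      using cv_nn[OF cv[of b] mb] .
  qed
  also have "\<dots> = (\<integral>\<^sup>+z. f z \<partial>(lborel \<Otimes>\<^sub>M lborel))"
  proof -
    have "f \<in> borel_measurable (lborel \<Otimes>\<^sub>M lborel)"
      unfolding lborel_prod by measurable
    from lborel_pair.nn_integral_snd[OF this] show ?thesis by simp
  qed
  also have "\<dots> = (\<integral>\<^sup>+z. f z \<partial>lborel)" by (simp add: lborel_prod)
  finally show "(\<integral>\<^sup>+z. ennreal (case z of (a, b) \<Rightarrow> j b a) * f (case z of (a, b) \<Rightarrow> (\<phi> b a, b)) \<partial>lborel) = (\<integral>\<^sup>+z. f z \<partial>lborel)" .
qed

lemma cv_pl2:
  fixes \<psi> :: "'a::euclidean_space \<Rightarrow> 'b::euclidean_space \<Rightarrow> 'b"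
  assumes cv: "\<And>a. cv (\<psi> a) (k a)"
    and m1: "(\<lambda>(a,b). \<psi> a b) \<in> borel_measurable borel"
    and m2: "(\<lambda>(a,b). k a b) \<in> borel_measurable borel"
  shows "cv (\<lambda>(a,b). (a, \<psi> a b)) (\<lambda>(a,b). k a b)"
  unfolding cv_def
proof (intro conjI allI impI)
  have m1': "(\<lambda>x. \<psi> (fst x) (snd x)) \<in> borel_measurable borel" using m1 by (simp add: case_prod_beta')
  have m2': "(\<lambda>x. k (fst x) (snd x)) \<in> borel_measurable borel" using m2 by (simp add: case_prod_beta')
  note [measurable] = m1' m2'
  show "(\<lambda>(a,b). (a, \<psi> a b)) \<in> borel_measurable borel"
    unfolding case_prod_beta' by measurable
  show "(\<lambda>(a,b). k a b) \<in> borel_measurable borel" by (rule m2)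
  show "0 \<le> (case z of (a, b) \<Rightarrow> k a b)" for z using cv unfolding cv_def by (auto split: prod.split)
  fix f :: "'a \<times> 'b \<Rightarrow> ennreal" assume [measurable]: "f \<in> borel_measurable borel"
  have "(\<integral>\<^sup>+z. ennreal (case z of (a, b) \<Rightarrow> k a b) * f (case z of (a, b) \<Rightarrow> (a, \<psi> a b)) \<partial>lborel)
     = (\<integral>\<^sup>+z. ennreal (k (fst z) (snd z)) * f (fst z, \<psi> (fst z) (snd z)) \<partial>(lborel \<Otimes>\<^sub>M lborel))"
    by (simp add: lborel_prod case_prod_beta')
  also have "\<dots> = (\<integral>\<^sup>+a. \<integral>\<^sup>+b. ennreal (k a b) * f (a, \<psi> a b) \<partial>lborel \<partial>lborel)"
  proof -
    have "(\<lambda>z. ennreal (k (fst z) (snd z)) * f (fst z, \<psi> (fst z) (snd z))) \<in> borel_measurable (lborel \<Otimes>\<^sub>M lborel)"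
      unfolding lborel_prod by measurable
    from lborel.nn_integral_fst[OF this] show ?thesis by simp
  qed
  also have "\<dots> = (\<integral>\<^sup>+a. \<integral>\<^sup>+b. f (a, b) \<partial>lborel \<partial>lborel)"
  proof (rule nn_integral_cong)
    fix a
    have mb: "(\<lambda>b. f (a, b)) \<in> borel_measurable borel" by measurable
    show "(\<integral>\<^sup>+b. ennreal (k a b) * f (a, \<psi> a b) \<partial>lborel) = (\<integral>\<^sup>+b. f (a, b) \<partial>lborel)"
      using cv_nn[OF cv[of a] mb] .
  qed
  also have "\<dots> = (\<integral>\<^sup>+z. f z \<partial>(lborel \<Otimes>\<^sub>M lborel))"
  proof -
    have "f \<in> borel_measurable (lborel \<Otimes>\<^sub>M lborel)"
      unfolding lborel_prod by measurable
    from lborel.nn_integral_fst[OF this] show ?thesis by simp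
  qed
  also have "\<dots> = (\<integral>\<^sup>+z. f z \<partial>lborel)" by (simp add: lborel_prod)
  finally show "(\<integral>\<^sup>+z. ennreal (case z of (a, b) \<Rightarrow> k a b) * f (case z of (a, b) \<Rightarrow> (a, \<psi> a b)) \<partial>lborel) = (\<integral>\<^sup>+z. f z \<partial>lborel)" .
qed

lemma cv_cong:
  assumes "cv \<Phi> j" "\<And>z. \<Phi> z = \<Phi>' z" "\<And>z. j z = j' z"
  shows "cv \<Phi>' j'"
proof -
  have "\<Phi> = \<Phi>'" "j = j'" using assms(2,3) by auto
  then show ?thesis using assms(1) by simp
qed

lemma cv_id: "cv (\<lambda>x::'a::euclidean_space. x) (\<lambda>_. 1)"
  using cv_affine[of 1 "0::'a"] by simp

lemma cv_prod:
  fixes \<phi> :: "'a::euclidean_space \<Rightarrow> 'a" and \<psi> :: "'b::euclidean_space \<Rightarrow> 'b"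
  assumes "cv \<phi> j" "cv \<psi> k"
  shows "cv (\<lambda>(a,b). (\<phi> a, \<psi> b)) (\<lambda>(a,b). j a * k b)"
proof -
  note [measurable] = cv_meas(1,2)[OF assms(1)] cv_meas(1,2)[OF assms(2)]
  have 1: "cv (\<lambda>(a,b). (\<phi> a, b)) (\<lambda>(a,b). j a)"
    by (rule cv_pl1[of "\<lambda>_. \<phi>" "\<lambda>_. j", simplified]) (auto intro: assms simp: case_prod_beta')
  have 2: "cv (\<lambda>(a,b). (a, \<psi> b)) (\<lambda>(a,b). k b)"
    by (rule cv_pl2[of "\<lambda>_. \<psi>" "\<lambda>_. k", simplified]) (auto intro: assms simp: case_prod_beta')
  show ?thesis
    by (rule cv_cong[OF cv_comp[OF 1 2]]) (auto split: prod.split simp: mult.commute)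
qed



lemma DIM_cart: "DIM(real^'n::finite) = CARD('n)" by simp

lemma cv_scale_exp:
  "cv (\<lambda>y::real^'n::finite. exp (lam * r) *\<^sub>R y) (\<lambda>_. exp (lam * r) ^ CARD('n))"
  using cv_affine[of "exp (lam * r)" "0::real^'n"] by simp

definition TJ :: "real \<Rightarrow> ('n::finite) pt \<Rightarrow> 'n pt" where
  "TJ lam = (\<lambda>(x,(y,r)). (exp (lam * r) *\<^sub>R x, (exp (lam * r) *\<^sub>R y, - r)))"

definition jJ :: "real \<Rightarrow> ('n::finite) pt \<Rightarrow> real" where
  "jJ lam = (\<lambda>(x,(y,r)). exp (lam * r) ^ (2 * CARD('n)))"

lemma cv_TJ: "cv (TJ lam :: ('n::finite) pt \<Rightarrow> _) (jJ lam)"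
proof -
  have s1: "cv (\<lambda>(y::real^'n, r::real). (exp (lam * r) *\<^sub>R y, r)) (\<lambda>(y, r). exp (lam * r) ^ CARD('n))"
    by (rule cv_pl1[of "\<lambda>r y. exp (lam * r) *\<^sub>R y" "\<lambda>r _. exp (lam * r) ^ CARD('n)", OF cv_scale_exp])
       (auto simp: case_prod_beta')
  have s1': "cv (\<lambda>(x::real^'n, (y::real^'n, r::real)). (x, (exp (lam * r) *\<^sub>R y, r))) (\<lambda>(x, (y, r)). exp (lam * r) ^ CARD('n))"
    apply (rule cv_cong[OF cv_pl2[of "\<lambda>_. (\<lambda>(y::real^'n, r::real). (exp (lam * r) *\<^sub>R y, r))" "\<lambda>_. (\<lambda>(y, r). exp (lam * r) ^ CARD('n))", OF s1]])
    by (auto simp: case_prod_beta' split: prod.split)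
  have s2: "cv (\<lambda>(x::real^'n, (y::real^'n, r::real)). (exp (lam * r) *\<^sub>R x, (y, r))) (\<lambda>(x, (y, r)). exp (lam * r) ^ CARD('n))"
    apply (rule cv_cong[OF cv_pl1[of "\<lambda>(y::real^'n, r::real) x. exp (lam * r) *\<^sub>R x" "\<lambda>(y, r) _. exp (lam * r) ^ CARD('n)"]])
    by (auto simp: case_prod_beta' cv_scale_exp split: prod.split)
  have neg: "cv (\<lambda>r::real. 0 + (-1) *\<^sub>R r) (\<lambda>_. \<bar>-1\<bar> ^ DIM(real))"
    by (rule cv_affine) simp
  have s3a: "cv (\<lambda>(y::real^'n, r::real). (y, - r)) (\<lambda>_. 1)"
    apply (rule cv_cong[OF cv_prod[OF cv_id neg]]) by auto
  have s3: "cv (\<lambda>(x::real^'n, (y::real^'n, r::real)). (x, (y, - r))) (\<lambda>_. 1)"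
    apply (rule cv_cong[OF cv_prod[OF cv_id s3a]]) by auto
  show ?thesis
    apply (rule cv_cong[OF cv_comp[OF s3 cv_comp[OF s2 s1']]])
    by (auto simp: TJ_def jJ_def power_add[symmetric] mult_2 split: prod.split)
qed



lemma Jhat_alt: "Jhat lam \<xi> = (\<lambda>(x,(y,r)). complex_of_real (exp (lam * r) ^ CARD('n)) * cnj (\<xi> (exp (lam * r) *\<^sub>R x, exp (lam * r) *\<^sub>R y, - r)))"
  for \<xi> :: "('n::finite) pt \<Rightarrow> complex"
  unfolding Jhat_def Let_def by simp

lemma Jhat_meas[measurable]:
  fixes \<xi> :: "('n::finite) pt \<Rightarrow> complex"
  assumes [measurable]: "\<xi> \<in> borel_measurable borel"
  shows "Jhat lam \<xi> \<in> borel_measurable borel"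
  unfolding Jhat_alt case_prod_beta' by measurable

lemma TJ_apply: "TJ lam (x, y, r) = (exp (lam * r) *\<^sub>R x, exp (lam * r) *\<^sub>R y, - r)"
  by (simp add: TJ_def)

lemma exp_inv_cancel: "exp (lam * - r) * exp (lam * r) = (1::real)"
  by (simp add: exp_minus)

lemma Jhat_TJ: "Jhat lam \<xi> (TJ lam (x, y, r)) =
    complex_of_real (inverse (exp (lam * r)) ^ CARD('n)) * cnj (\<xi> (x, y, r))"
  for \<xi> :: "('n::finite) pt \<Rightarrow> complex"
  by (simp add: Jhat_alt TJ_apply exp_inv_cancel exp_minus)

lemma L2_meas: "L2 f \<Longrightarrow> f \<in> borel_measurable borel"
  unfolding L2_def by simp

lemma L2_Jhat:
  fixes \<xi> :: "('n::finite) pt \<Rightarrow> complex"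
  assumes "L2 \<xi>"
  shows "L2 (Jhat lam \<xi>)"
proof -
  have [measurable]: "\<xi> \<in> borel_measurable borel" using assms by (simp add: L2_def)
  have int: "integrable lborel (\<lambda>p. (cmod (\<xi> p))^2)" using assms by (simp add: L2_def)
  have g: "(\<lambda>p. (cmod (\<xi> p))^2) \<in> borel_measurable borel" by measurable
  have "integrable lborel (\<lambda>z. jJ lam z *\<^sub>R (cmod (\<xi> (TJ lam z)))^2)"
    using cv_integral(2)[OF cv_TJ g] int by simp
  moreover have "(\<lambda>z. jJ lam z *\<^sub>R (cmod (\<xi> (TJ lam z)))^2) = (\<lambda>p. (cmod (Jhat lam \<xi> p))^2)"
  proof
    fix z :: "'n pt"
    obtain x y r where z: "z = (x, y, r)" by (cases z) auto
    have "(cmod (Jhat lam \<xi> z))^2 = (exp (lam * r) ^ CARD('n))^2 * (cmod (\<xi> (TJ lam z)))^2"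
      unfolding z Jhat_alt TJ_apply by (simp add: norm_mult norm_power power_mult_distrib)
    also have "\<dots> = jJ lam z * (cmod (\<xi> (TJ lam z)))^2"
      unfolding z jJ_def by (simp add: power_mult[symmetric] mult.commute)
    finally show "jJ lam z *\<^sub>R (cmod (\<xi> (TJ lam z)))^2 = (cmod (Jhat lam \<xi> z))^2" by simp
  qed
  ultimately show ?thesis unfolding L2_def by simp
qed

lemma ip_Jhat:
  fixes a b :: "('n::finite) pt \<Rightarrow> complex"
  assumes [measurable]: "a \<in> borel_measurable borel" "b \<in> borel_measurable borel"
  shows "ip (Jhat lam a) b = ip (Jhat lam b) a"
proof -
  have g: "(\<lambda>p. Jhat lam a p * cnj (b p)) \<in> borel_measurable borel" by measurable
  have "ip (Jhat lam a) b = integral\<^sup>L lborel (\<lambda>z. jJ lam z *\<^sub>R (Jhat lam a (TJ lam z) * cnj (b (TJ lam z))))"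
    unfolding ip_def by (rule cv_integral(1)[OF cv_TJ g])
  also have "\<dots> = ip (Jhat lam b) a" unfolding ip_def
  proof (rule Bochner_Integration.integral_cong[OF refl])
    fix z :: "('n::finite) pt"
    obtain x y r where z: "z = (x, y, r)" by (cases z) auto
    have e: "exp (lam * r) ^ (2 * CARD('n)) * inverse (exp (lam * r)) ^ CARD('n) = exp (lam * r) ^ CARD('n)"
    proof -
      have "exp (lam * r) ^ (2 * CARD('n)) = exp (lam * r) ^ CARD('n) * exp (lam * r) ^ CARD('n)"
        by (simp add: mult_2 power_add)
      moreover have "exp (lam * r) ^ CARD('n) * inverse (exp (lam * r)) ^ CARD('n) = 1"
        by (simp add: power_mult_distrib[symmetric])
      ultimately show ?thesis by (simp add: mult.assoc)
    qed
    show "jJ lam z *\<^sub>R (Jhat lam a (TJ lam z) * cnj (b (TJ lam z))) = Jhat lam b z * cnj (a z)"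
    proof -
      have "jJ lam z *\<^sub>R (Jhat lam a (TJ lam z) * cnj (b (TJ lam z)))
         = complex_of_real (exp (lam * r) ^ (2 * CARD('n)) * inverse (exp (lam * r)) ^ CARD('n))
            * (cnj (a z) * cnj (b (TJ lam z)))"
        unfolding z Jhat_TJ jJ_def by (simp add: scaleR_conv_of_real mult.assoc)
      also have "\<dots> = complex_of_real (exp (lam * r) ^ CARD('n)) * (cnj (a z) * cnj (b (TJ lam z)))"
        by (simp only: e)
      also have "\<dots> = Jhat lam b z * cnj (a z)"
        unfolding z Jhat_alt TJ_apply by simp
      finally show ?thesis .
    qed
  qed
  finally show ?thesis .
qed



lemma UA_apply: "UA lam \<xi> ((x, y, r), (x', y', r')) =
   complex_of_real (exp (- lam * r') ^ CARD('n))
       * ebar (eta_lam lam r' * beta (exp (- lam * r') *\<^sub>R x) (y' - exp (- lam * r') *\<^sub>R y))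
       * \<xi> ((exp (- lam * r') *\<^sub>R x, exp (- lam * r') *\<^sub>R y, r + r'), (x' - exp (- lam * r') *\<^sub>R x, y' - exp (- lam * r') *\<^sub>R y, r'))"
  for \<xi> :: "('n::finite) pt \<times> 'n pt \<Rightarrow> complex"
  unfolding UA_def Let_def by simp

lemma Jhat_apply: "Jhat lam \<xi> (x, y, r) = complex_of_real (exp (lam * r) ^ CARD('n)) * cnj (\<xi> (exp (lam * r) *\<^sub>R x, exp (lam * r) *\<^sub>R y, - r))"
  for \<xi> :: "('n::finite) pt \<Rightarrow> complex"
  unfolding Jhat_def Let_def by simp

lemma cnj_ebar: "cnj (ebar t) = ebar (- t)"
  unfolding ebar_def by (simp add: cis_cnj)

lemma ebar_add: "ebar (s + t) = ebar s * ebar t"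
  unfolding ebar_def cis_mult by (simp add: algebra_simps)

lemma eta_neg: "eta_lam lam (- s) * (exp (lam * s) * exp (lam * s)) = - eta_lam lam s"
proof -
  define A where "A = exp (2 * lam * - s)"
  define B where "B = exp (lam * s) * exp (lam * s)"
  have AB: "A * B = 1" unfolding A_def B_def by (simp add: exp_add[symmetric])
  have B: "exp (2 * lam * s) = B" unfolding B_def by (simp add: exp_add[symmetric])
  have "eta_lam lam (- s) * B = ((A - 1) * B) / (2 * lam)"
    unfolding eta_lam_def A_def by simp
  also have "\<dots> = (1 - B) / (2 * lam)" using AB by (simp add: algebra_simps)
  also have "\<dots> = - eta_lam lam s" unfolding eta_lam_def B by (simp add: minus_divide_left)
  finally show ?thesis unfolding B_def .
qed

lemma phase1: "ebar (eta_lam lam (- s) * beta (exp (lam * s) *\<^sub>R x) (exp (lam * s) *\<^sub>R Y - exp (lam * s) *\<^sub>R y))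
   = cnj (ebar (eta_lam lam s * beta x (Y - y)))"
proof -
  have "eta_lam lam (- s) * beta (exp (lam * s) *\<^sub>R x) (exp (lam * s) *\<^sub>R Y - exp (lam * s) *\<^sub>R y)
      = (eta_lam lam (- s) * (exp (lam * s) * exp (lam * s))) * beta x (Y - y)"
    by (simp add: beta_def scaleR_diff_right[symmetric] inner_scaleR_left inner_scaleR_right)
  also have "\<dots> = - (eta_lam lam s * beta x (Y - y))" by (simp add: eta_neg)
  finally show ?thesis by (simp add: cnj_ebar)
qed



lemma ebar_meas[measurable]: "ebar \<in> borel_measurable borel"
  unfolding ebar_def by (intro borel_measurable_continuous_onI continuous_intros)

lemma eta_meas[measurable]: "eta_lam lam \<in> borel_measurable borel"
  unfolding eta_lam_def by measurable

lemma beta_meas[measurable (raw)]: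
  "f \<in> M \<rightarrow>\<^sub>M borel \<Longrightarrow> g \<in> M \<rightarrow>\<^sub>M borel \<Longrightarrow> (\<lambda>x. beta (f x) (g x)) \<in> M \<rightarrow>\<^sub>M borel"
  unfolding beta_def by measurable

lemma tensor_meas[measurable]:
  fixes a b :: "('n::finite) pt \<Rightarrow> complex"
  assumes [measurable]: "a \<in> borel_measurable borel" "b \<in> borel_measurable borel"
  shows "tensor a b \<in> borel_measurable borel"
  unfolding tensor_def case_prod_beta' by measurable

lemma UA_alt: "UA lam \<xi> = (\<lambda>w.
   complex_of_real (exp (- lam * snd (snd (snd w))) ^ CARD('n))
       * ebar (eta_lam lam (snd (snd (snd w))) * beta (exp (- lam * snd (snd (snd w))) *\<^sub>R fst (fst w))
                 (fst (snd (snd w)) - exp (- lam * snd (snd (snd w))) *\<^sub>R fst (snd (fst w))))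
       * \<xi> ((exp (- lam * snd (snd (snd w))) *\<^sub>R fst (fst w), exp (- lam * snd (snd (snd w))) *\<^sub>R fst (snd (fst w)),
             snd (snd (fst w)) + snd (snd (snd w))),
            (fst (snd w) - exp (- lam * snd (snd (snd w))) *\<^sub>R fst (fst w),
             fst (snd (snd w)) - exp (- lam * snd (snd (snd w))) *\<^sub>R fst (snd (fst w)), snd (snd (snd w)))))"
  for \<xi> :: "('n::finite) pt \<times> 'n pt \<Rightarrow> complex"
  unfolding UA_def Let_def by (auto simp: case_prod_beta')

lemma UA_meas[measurable]:
  fixes \<xi> :: "('n::finite) pt \<times> 'n pt \<Rightarrow> complex"
  assumes [measurable]: "\<xi> \<in> borel_measurable borel"
  shows "UA lam \<xi> \<in> borel_measurable borel"
  unfolding UA_alt by measurable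



lemma cv1: "cv (\<lambda>(p :: ('n::finite) pt, q :: 'n pt). (p, TJ lam q)) (\<lambda>(p,q). jJ lam q)"
  by (rule cv_cong[OF cv_prod[OF cv_id cv_TJ]]) auto

lemma cvA: "cv (\<lambda>(x :: real^'n::finite, (y :: real^'n, r :: real)). (exp (lam * s) *\<^sub>R x, (exp (lam * s) *\<^sub>R y, r - s)))
   (\<lambda>_. exp (lam * s) ^ (2 * CARD('n)))"
proof -
  have tr: "cv (\<lambda>r::real. r - s) (\<lambda>_. 1)"
    by (rule cv_cong[OF cv_affine[of 1 "-s"]]) auto
  show ?thesis
    by (rule cv_cong[OF cv_prod[OF cv_scale_exp cv_prod[OF cv_scale_exp tr]]])
       (auto simp: mult_2 power_add)
qed

lemma cv2: "cv (\<lambda>(p :: ('n::finite) pt, q :: 'n pt). (case p of (x, y, r) \<Rightarrow> (exp (lam * snd (snd q)) *\<^sub>R x, exp (lam * snd (snd q)) *\<^sub>R y, r - snd (snd q)), q))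
   (\<lambda>(p,q). exp (lam * snd (snd q)) ^ (2 * CARD('n)))"
  by (rule cv_cong[OF cv_pl1[of "\<lambda>q. \<lambda>(x :: real^'n::finite, (y :: real^'n, r :: real)). (exp (lam * snd (snd q)) *\<^sub>R x, (exp (lam * snd (snd q)) *\<^sub>R y, r - snd (snd q)))"
        "\<lambda>q _. exp (lam * snd (snd q)) ^ (2 * CARD('n))", OF cvA]])
    (auto simp: case_prod_beta')

lemma star_pt:
  fixes a b \<zeta> zz :: "('n::finite) pt \<Rightarrow> complex"
  shows "jJ lam (X, Y, s) *\<^sub>R (UA lam (tensor a (Jhat lam zz)) ((x, y, r), TJ lam (X, Y, s)) * cnj (tensor b (Jhat lam \<zeta>) ((x, y, r), TJ lam (X, Y, s))))
       = exp (lam * s) ^ (2 * CARD('n)) *\<^sub>R (tensor a \<zeta> ((exp (lam * s) *\<^sub>R x, exp (lam * s) *\<^sub>R y, r - s), (X, Y, s))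
            * cnj (UA lam (tensor b zz) ((exp (lam * s) *\<^sub>R x, exp (lam * s) *\<^sub>R y, r - s), (X, Y, s))))"
proof -
  define E where "E = exp (lam * s)"
  define Ei where "Ei = exp (- (lam * s))"
  have EEi: "Ei * E = 1" "E * Ei = 1" unfolding E_def Ei_def by (simp_all add: exp_minus)
  have e1: "exp (- lam * - s) = E" "exp (lam * - s) = Ei" "exp (- lam * s) = Ei" "exp (lam * s) = E"
    unfolding E_def Ei_def by simp_all
  have v1: "Ei *\<^sub>R (E *\<^sub>R v) = v" for v :: "real^'n" using EEi by simp
  have v2: "Ei *\<^sub>R (E *\<^sub>R X - E *\<^sub>R v) = X - v" for v X :: "real^'n"
    using EEi by (simp add: scaleR_diff_right)
  show ?thesis
  proof -
    have ph: "ebar (eta_lam lam (- s) * beta (E *\<^sub>R x) (E *\<^sub>R Y - E *\<^sub>R y)) = cnj (ebar (eta_lam lam s * beta x (Y - y)))"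
      using phase1 unfolding E_def .
    have Epos: "E > 0" unfolding E_def by simp
    have Ei: "complex_of_real Ei = inverse (complex_of_real E)"
    proof -
      have "Ei = inverse E" unfolding Ei_def E_def by (simp add: exp_minus)
      then show ?thesis by (simp add: of_real_inverse)
    qed
    have jj: "jJ lam (X, Y, s) = E ^ (2 * CARD('n))" unfolding jJ_def E_def by simp
    show ?thesis
      unfolding UA_apply TJ_apply tensor_def e1 prod.case
      unfolding Jhat_apply e1 jj
      apply (simp only: v1 v2 prod.case ph minus_minus diff_add_cancel diff_conv_add_uminus[symmetric])
      apply (simp add: Ei scaleR_conv_of_real[where 'a=complex])
      using Epos apply (simp add: field_simps)
      done
  qed
qed

lemma star:
  fixes a b \<zeta> zz :: "('n::finite) pt \<Rightarrow> complex"
  assumes [measurable]: "a \<in> borel_measurable borel" "b \<in> borel_measurable borel"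
    "\<zeta> \<in> borel_measurable borel" "zz \<in> borel_measurable borel"
  shows "ip (UA lam (tensor a (Jhat lam zz))) (tensor b (Jhat lam \<zeta>)) = ip (tensor a \<zeta>) (UA lam (tensor b zz))"
proof -
  define Lf where "Lf = (\<lambda>w. UA lam (tensor a (Jhat lam zz)) w * cnj (tensor b (Jhat lam \<zeta>) w))"
  define Rf where "Rf = (\<lambda>w. tensor a \<zeta> w * cnj (UA lam (tensor b zz) w))"
  have mL: "Lf \<in> borel_measurable borel" unfolding Lf_def by measurable
  have mR: "Rf \<in> borel_measurable borel" unfolding Rf_def by measurable
  have "ip (UA lam (tensor a (Jhat lam zz))) (tensor b (Jhat lam \<zeta>)) = integral\<^sup>L lborel Lf"
    unfolding ip_def Lf_def ..
  also have "\<dots> = integral\<^sup>L lborel (\<lambda>w. (case w of (p, q) \<Rightarrow> jJ lam q) *\<^sub>R Lf (case w of (p, q) \<Rightarrow> (p, TJ lam q)))"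
    by (rule cv_integral(1)[OF cv1 mL])
  also have "\<dots> = integral\<^sup>L lborel (\<lambda>w. (case w of (p, q) \<Rightarrow> exp (lam * snd (snd q)) ^ (2 * CARD('n))) *\<^sub>R
      Rf (case w of (p, q) \<Rightarrow> (case p of (x, y, r) \<Rightarrow> (exp (lam * snd (snd q)) *\<^sub>R x, exp (lam * snd (snd q)) *\<^sub>R y, r - snd (snd q)), q)))"
  proof (rule Bochner_Integration.integral_cong[OF refl])
    fix w :: "'n pt \<times> 'n pt"
    obtain x y r X Y s where w: "w = ((x, y, r), (X, Y, s))" by (cases w) auto
    show "(case w of (p, q) \<Rightarrow> jJ lam q) *\<^sub>R Lf (case w of (p, q) \<Rightarrow> (p, TJ lam q)) =
      (case w of (p, q) \<Rightarrow> exp (lam * snd (snd q)) ^ (2 * CARD('n))) *\<^sub>R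
      Rf (case w of (p, q) \<Rightarrow> (case p of (x, y, r) \<Rightarrow> (exp (lam * snd (snd q)) *\<^sub>R x, exp (lam * snd (snd q)) *\<^sub>R y, r - snd (snd q)), q))"
      unfolding w Lf_def Rf_def prod.case snd_conv using star_pt[of lam X Y s a zz x y r b \<zeta>] by simp
  qed
  also have "\<dots> = integral\<^sup>L lborel Rf"
    by (rule cv_integral(1)[OF cv2 mR, symmetric])
  also have "\<dots> = ip (tensor a \<zeta>) (UA lam (tensor b zz))"
    unfolding ip_def Rf_def ..
  finally show ?thesis .
qed



lemma ip_swap: "ip a b = cnj (ip b a)"
proof -
  have "(\<lambda>p. a p * cnj (b p)) = (\<lambda>p. cnj (b p * cnj (a p)))" by (simp add: mult.commute)
  then show ?thesis unfolding ip_def by (simp only: Bochner_Integration.integral_cnj)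
qed

lemma part1:
  fixes \<xi>s :: "nat \<Rightarrow> ('n::finite) pt \<Rightarrow> complex"
  assumes "normal_rep \<xi>s \<eta>s" "slice_UA lam \<xi>s \<eta>s X" "is_adjoint X Xs" "slice_UA_adj lam \<xi>s \<eta>s Y"
    and z: "L2 \<zeta>" "L2 \<zeta>'"
  shows "ip (Jhat lam (Xs (Jhat lam \<zeta>))) \<zeta>' = ip (Y \<zeta>) \<zeta>'"
proof -
  have Jz: "L2 (Jhat lam \<zeta>)" "L2 (Jhat lam \<zeta>')" using z L2_Jhat by auto
  have XsJ: "L2 (Xs (Jhat lam \<zeta>))" using assms(3) Jz unfolding is_adjoint_def by auto
  have L2k: "L2 (\<xi>s k)" "L2 (\<eta>s k)" for k using assms(1) unfolding normal_rep_def by auto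
  have "ip (Jhat lam (Xs (Jhat lam \<zeta>))) \<zeta>' = ip (Jhat lam \<zeta>') (Xs (Jhat lam \<zeta>))"
    by (rule ip_Jhat) (use XsJ z in \<open>auto simp: L2_meas\<close>)
  also have "\<dots> = cnj (ip (Xs (Jhat lam \<zeta>)) (Jhat lam \<zeta>'))" by (rule ip_swap)
  also have "\<dots> = cnj (ip (Jhat lam \<zeta>) (X (Jhat lam \<zeta>')))"
    using assms(3) Jz unfolding is_adjoint_def by auto
  also have "\<dots> = ip (X (Jhat lam \<zeta>')) (Jhat lam \<zeta>)" by (simp add: ip_swap[of "X (Jhat lam \<zeta>')"])
  also have "\<dots> = (\<Sum>k. ip (UA lam (tensor (\<xi>s k) (Jhat lam \<zeta>'))) (tensor (\<eta>s k) (Jhat lam \<zeta>)))"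
    using assms(2) Jz unfolding slice_UA_def by auto
  also have "\<dots> = (\<Sum>k. ip (tensor (\<xi>s k) \<zeta>) (UA lam (tensor (\<eta>s k) \<zeta>')))"
    using star[OF L2_meas[OF L2k(1)] L2_meas[OF L2k(2)] L2_meas[OF z(1)] L2_meas[OF z(2)]] by simp
  also have "\<dots> = ip (Y \<zeta>) \<zeta>'"
    using assms(4) z unfolding slice_UA_adj_def by auto
  finally show ?thesis .
qed



definition LI :: "real \<Rightarrow> (('n::finite) pt \<Rightarrow> complex) \<Rightarrow> ('n pt \<Rightarrow> complex) \<Rightarrow> ('n pt \<Rightarrow> complex)
    \<Rightarrow> ('n pt \<times> ((real^'n) \<times> (real^'n)) \<Rightarrow> complex)" where
  "LI lam f g1 g2 = (\<lambda>((x, y, r), (xt, yt)). f (xt, yt, r) * g1 (x - xt, y - yt, r)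
        * ebar (eta_lam lam r * beta xt (y - yt)) * cnj (g2 (x, y, r)))"

lemma LI_meas[measurable]:
  fixes f g1 g2 :: "('n::finite) pt \<Rightarrow> complex"
  assumes [measurable]: "f \<in> borel_measurable borel" "g1 \<in> borel_measurable borel" "g2 \<in> borel_measurable borel"
  shows "LI lam f g1 g2 \<in> borel_measurable borel"
  unfolding LI_def case_prod_beta' by measurable

lemma ipLf_eq:
  fixes f g1 g2 :: "('n::finite) pt \<Rightarrow> complex"
  assumes int: "integrable lborel (LI lam f g1 g2)"
  shows "ip (Lf lam f g1) g2 = integral\<^sup>L lborel (LI lam f g1 g2)"
proof -
  have "ip (Lf lam f g1) g2 = (\<integral>p. (\<integral>q. LI lam f g1 g2 (p, q) \<partial>lborel) \<partial>lborel)"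
    unfolding ip_def
  proof (rule Bochner_Integration.integral_cong[OF refl])
    fix p :: "'n pt"
    obtain x y r where p: "p = (x, y, r)" by (cases p) auto
    show "Lf lam f g1 p * cnj (g2 p) = (\<integral>q. LI lam f g1 g2 (p, q) \<partial>lborel)"
      unfolding p Lf_def LI_def prod.case
      by (subst integral_mult_left_zero[symmetric]) (simp add: case_prod_beta')
  qed
  also have "\<dots> = integral\<^sup>L (lborel \<Otimes>\<^sub>M lborel) (LI lam f g1 g2)"
    by (rule lborel_pair.integral_fst') (simp add: lborel_prod int)
  also have "\<dots> = integral\<^sup>L lborel (LI lam f g1 g2)" by (simp add: lborel_prod)
  finally show ?thesis .
qed

lemma cv_shear:
  "cv (\<lambda>(p :: ('n::finite) pt, q :: (real^'n) \<times> (real^'n)). (case p of (x, y, r) \<Rightarrow> (x - fst q, y - snd q, r), q)) (\<lambda>_. 1)"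
proof -
  have aff: "cv (\<lambda>(x, y, r::real). (x - fst q, y - snd q, r)) (\<lambda>_. 1)" for q :: "(real^'n) \<times> (real^'n)"
    by (rule cv_cong[OF cv_affine[of 1 "- (fst q, snd q, 0) :: 'n pt"]]) (auto split: prod.split)
  show ?thesis
    by (rule cv_cong[OF cv_pl1[of "\<lambda>q. \<lambda>(x, y, r::real). (x - fst q, y - snd q, r)" "\<lambda>_ _. 1", OF aff]])
       (auto simp: case_prod_beta')
qed



lemma L1type_meas: "L1type f \<Longrightarrow> f \<in> borel_measurable borel"
  unfolding L1type_def by simp

lemma L1_nf:
  fixes f :: "('n::finite) pt \<Rightarrow> complex"
  assumes "L1type f"
  obtains C where "\<And>r. (\<integral>\<^sup>+q. ennreal (cmod (f (fst q, snd q, r))) \<partial>(lborel :: ((real^'n) \<times> (real^'n)) measure)) \<le> ennreal C"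
proof -
  obtain C where C: "\<And>r. integral\<^sup>L (lborel :: ((real^'n) \<times> (real^'n)) measure) (\<lambda>(a, b). cmod (f (a, b, r))) \<le> C"
    using assms unfolding L1type_def by blast
  have I: "integrable (lborel :: ((real^'n) \<times> (real^'n)) measure) (\<lambda>(a, b). f (a, b, r))" for r
    using assms unfolding L1type_def by blast
  have "(\<integral>\<^sup>+q. ennreal (cmod (f (fst q, snd q, r))) \<partial>(lborel :: ((real^'n) \<times> (real^'n)) measure)) \<le> ennreal C" for r
  proof -
    have In: "integrable (lborel :: ((real^'n) \<times> (real^'n)) measure) (\<lambda>q. cmod (f (fst q, snd q, r)))"
      using integrable_norm[OF I[of r]] by (simp add: case_prod_beta')
    have "(\<integral>\<^sup>+q. ennreal (cmod (f (fst q, snd q, r))) \<partial>(lborel :: ((real^'n) \<times> (real^'n)) measure))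
        = ennreal (integral\<^sup>L lborel (\<lambda>q. cmod (f (fst q, snd q, r))))"
      by (rule nn_integral_eq_integral[OF In]) simp
    also have "\<dots> \<le> ennreal C" using C[of r] by (intro ennreal_leI) (simp add: case_prod_beta')
    finally show ?thesis .
  qed
  then show ?thesis using that by blast
qed

lemma LI_bound:
  fixes f g :: "('n::finite) pt \<Rightarrow> complex"
  assumes f: "L1type f" and g: "L2 g"
  shows "(\<integral>\<^sup>+z. ennreal (cmod (f (fst (snd z), snd (snd z), snd (snd (fst z)))) * (cmod (g (fst z)))^2)
      \<partial>(lborel :: ('n pt \<times> ((real^'n) \<times> (real^'n))) measure)) < \<infinity>"
proof -
  obtain C where C: "\<And>r. (\<integral>\<^sup>+q. ennreal (cmod (f (fst q, snd q, r))) \<partial>(lborel :: ((real^'n) \<times> (real^'n)) measure)) \<le> ennreal C"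
    using L1_nf[OF f] by blast
  have [measurable]: "f \<in> borel_measurable borel" using f by (rule L1type_meas)
  have [measurable]: "g \<in> borel_measurable borel" using g by (rule L2_meas)
  have gi: "integrable lborel (\<lambda>p. (cmod (g p))^2)" using g unfolding L2_def by simp
  have "(\<integral>\<^sup>+z. ennreal (cmod (f (fst (snd z), snd (snd z), snd (snd (fst z)))) * (cmod (g (fst z)))^2)
      \<partial>(lborel :: ('n pt \<times> ((real^'n) \<times> (real^'n))) measure))
    = (\<integral>\<^sup>+p. \<integral>\<^sup>+q. ennreal ((cmod (g p))^2) * ennreal (cmod (f (fst q, snd q, snd (snd p)))) \<partial>lborel \<partial>lborel)"
  proof -
    have m: "(\<lambda>z. ennreal (cmod (f (fst (snd z), snd (snd z), snd (snd (fst z)))) * (cmod (g (fst z)))^2))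
       \<in> borel_measurable ((lborel :: 'n pt measure) \<Otimes>\<^sub>M (lborel :: ((real^'n) \<times> (real^'n)) measure))"
      unfolding lborel_prod by measurable
    have eq: "(lborel :: ('n pt \<times> ((real^'n) \<times> (real^'n))) measure) = lborel \<Otimes>\<^sub>M lborel"
      by (simp add: lborel_prod)
    show ?thesis
      unfolding eq lborel.nn_integral_fst[OF m, symmetric]
      by (intro nn_integral_cong) (simp add: ennreal_mult mult.commute)
  qed
  also have "\<dots> = (\<integral>\<^sup>+p. ennreal ((cmod (g p))^2) * (\<integral>\<^sup>+q. ennreal (cmod (f (fst q, snd q, snd (snd p)))) \<partial>lborel) \<partial>lborel)"
    by (intro nn_integral_cong nn_integral_cmult) simp
  also have "\<dots> \<le> (\<integral>\<^sup>+p. ennreal ((cmod (g p))^2) * ennreal C \<partial>lborel)"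
    by (intro nn_integral_mono mult_left_mono C) simp
  also have "\<dots> = (\<integral>\<^sup>+p. ennreal ((cmod (g p))^2) \<partial>lborel) * ennreal C"
    by (rule nn_integral_multc) simp
  also have "\<dots> = ennreal (integral\<^sup>L lborel (\<lambda>p. (cmod (g p))^2)) * ennreal C"
    by (subst nn_integral_eq_integral[OF gi]) simp_all
  also have "\<dots> < \<infinity>" by (simp add: ennreal_mult_less_top)
  finally show ?thesis .
qed

lemma amgm: "(a::real) * b \<le> a^2 + b^2"
proof -
  have "0 \<le> (a - b)^2" by simp
  then have "2 * (a * b) \<le> a^2 + b^2" by (simp add: power2_eq_square algebra_simps)
  moreover have "0 \<le> a^2" "0 \<le> b^2" by simp_all
  ultimately show ?thesis by linarith
qed

lemma LI_int:
  fixes f g1 g2 :: "('n::finite) pt \<Rightarrow> complex"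
  assumes f: "L1type f" and g1: "L2 g1" and g2: "L2 g2"
  shows "integrable lborel (LI lam f g1 g2)"
proof -
  have [measurable]: "f \<in> borel_measurable borel" using f by (rule L1type_meas)
  have [measurable]: "g1 \<in> borel_measurable borel" using g1 by (rule L2_meas)
  have [measurable]: "g2 \<in> borel_measurable borel" using g2 by (rule L2_meas)
  define h1 where "h1 = (\<lambda>z::'n pt \<times> ((real^'n) \<times> (real^'n)). cmod (f (fst (snd z), snd (snd z), snd (snd (fst z)))) * (cmod (g1 (fst z)))^2)"
  define h2 where "h2 = (\<lambda>z::'n pt \<times> ((real^'n) \<times> (real^'n)). cmod (f (fst (snd z), snd (snd z), snd (snd (fst z)))) * (cmod (g2 (fst z)))^2)"
  define Sh where "Sh = (\<lambda>(p :: ('n::finite) pt, q :: (real^'n) \<times> (real^'n)). (case p of (x, y, r) \<Rightarrow> (x - fst q, y - snd q, r), q))"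
  have mh1: "h1 \<in> borel_measurable borel" unfolding h1_def by measurable
  have mh2: "h2 \<in> borel_measurable borel" unfolding h2_def by measurable
  have b1: "(\<integral>\<^sup>+z. ennreal (h1 z) \<partial>lborel) < \<infinity>" unfolding h1_def by (rule LI_bound[OF f g1])
  have b2: "(\<integral>\<^sup>+z. ennreal (h2 z) \<partial>lborel) < \<infinity>" unfolding h2_def by (rule LI_bound[OF f g2])
  have cvS: "cv Sh (\<lambda>_. 1)" unfolding Sh_def by (rule cv_shear)
  have mSh[measurable]: "Sh \<in> borel_measurable borel" by (rule cv_meas(1)[OF cvS])
  note mh1[measurable] mh2[measurable]
  have sh: "(\<integral>\<^sup>+z. ennreal 1 * ennreal (h1 (Sh z)) \<partial>lborel) = (\<integral>\<^sup>+z. ennreal (h1 z) \<partial>lborel)"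
    by (rule cv_nn[OF cvS]) measurable
  have pw: "ennreal (norm (LI lam f g1 g2 z)) \<le> ennreal (h1 (Sh z)) + ennreal (h2 z)" for z
  proof -
    obtain x y r xt yt where z: "z = ((x, y, r), (xt, yt))" by (cases z) auto
    have n: "norm (LI lam f g1 g2 z) = cmod (f (xt, yt, r)) * (cmod (g1 (x - xt, y - yt, r)) * cmod (g2 (x, y, r)))"
      unfolding z LI_def by (simp add: norm_mult ebar_def)
    have "cmod (g1 (x - xt, y - yt, r)) * cmod (g2 (x, y, r)) \<le> (cmod (g1 (x - xt, y - yt, r)))^2 + (cmod (g2 (x, y, r)))^2"
      by (rule amgm)
    then have "norm (LI lam f g1 g2 z) \<le> cmod (f (xt, yt, r)) * ((cmod (g1 (x - xt, y - yt, r)))^2 + (cmod (g2 (x, y, r)))^2)"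
      unfolding n by (rule mult_left_mono) simp
    also have "\<dots> = h1 (Sh z) + h2 z"
      unfolding z h1_def h2_def Sh_def by (simp add: distrib_left)
    finally have le: "norm (LI lam f g1 g2 z) \<le> h1 (Sh z) + h2 z" .
    have "0 \<le> h1 (Sh z)" "0 \<le> h2 z" unfolding h1_def h2_def by simp_all
    then show ?thesis using ennreal_leI[OF le] by (simp add: ennreal_plus)
  qed
  have "(\<integral>\<^sup>+z. ennreal (norm (LI lam f g1 g2 z)) \<partial>lborel) \<le> (\<integral>\<^sup>+z. ennreal (h1 (Sh z)) + ennreal (h2 z) \<partial>lborel)"
    by (intro nn_integral_mono pw)
  also have "\<dots> = (\<integral>\<^sup>+z. ennreal (h1 (Sh z)) \<partial>lborel) + (\<integral>\<^sup>+z. ennreal (h2 z) \<partial>lborel)"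
    by (rule nn_integral_add) measurable
  also have "\<dots> < \<infinity>" using sh b1 b2 by simp
  finally show ?thesis unfolding integrable_iff_bounded by simp
qed



lemma cvPhi: "cv (\<lambda>((X :: real^'n::finite, (Y :: real^'n, s :: real)), (u :: real^'n, v :: real^'n)).
      ((exp (lam * s) *\<^sub>R (X - u), (exp (lam * s) *\<^sub>R (Y - v), - s)), (- (exp (lam * s) *\<^sub>R u), - (exp (lam * s) *\<^sub>R v))))
    (\<lambda>((X, (Y, s)), (u, v)). exp (lam * s) ^ (4 * CARD('n)))"
proof -
  have ca: "cv (\<lambda>(p :: ('n::finite) pt, q :: (real^'n) \<times> (real^'n)). (case p of (x, y, r) \<Rightarrow> (x - fst q, y - snd q, r), q)) (\<lambda>_. 1)"
    by (rule cv_shear)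
  have aff: "cv (\<lambda>w :: (real^'n) \<times> (real^'n). 0 + (- exp (lam * snd (snd p))) *\<^sub>R w)
      (\<lambda>_. \<bar>- exp (lam * snd (snd p))\<bar> ^ DIM((real^'n) \<times> (real^'n)))" for p :: "'n pt"
    by (rule cv_affine) simp
  have cb: "cv (\<lambda>(p :: 'n pt, w :: (real^'n) \<times> (real^'n)). (p, 0 + (- exp (lam * snd (snd p))) *\<^sub>R w))
      (\<lambda>(p, w). \<bar>- exp (lam * snd (snd p))\<bar> ^ DIM((real^'n) \<times> (real^'n)))"
    by (rule cv_pl2[OF aff]) (auto simp: case_prod_beta')
  have cc: "cv (\<lambda>(a :: 'n pt, b :: (real^'n) \<times> (real^'n)). (TJ lam a, b)) (\<lambda>(a, b). jJ lam a * 1)"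
    by (rule cv_prod[OF cv_TJ cv_id])
  show ?thesis
    apply (rule cv_cong[OF cv_comp[OF cc cv_comp[OF cb ca]]])
     apply (auto simp: TJ_def scaleR_diff_right split: prod.split)[1]
    apply (auto simp: jJ_def power_add[symmetric] split: prod.split)
    done
qed

lemma phase2:
  "ebar (eta_lam lam (- s) * beta (- (exp (lam * s) *\<^sub>R u)) (exp (lam * s) *\<^sub>R Y))
   = ebar (eta_lam lam s * beta u v) * ebar (eta_lam lam s * beta u (Y - v))"
proof -
  have "eta_lam lam (- s) * beta (- (exp (lam * s) *\<^sub>R u)) (exp (lam * s) *\<^sub>R Y)
      = - (eta_lam lam (- s) * (exp (lam * s) * exp (lam * s))) * beta u Y"
    by (simp add: beta_def inner_scaleR_left inner_scaleR_right)
  also have "\<dots> = eta_lam lam s * beta u v + eta_lam lam s * beta u (Y - v)"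
    by (simp add: eta_neg beta_def inner_diff_right algebra_simps)
  finally show ?thesis by (simp add: ebar_add)
qed

lemma Lf_pt:
  fixes f \<zeta> zz :: "('n::finite) pt \<Rightarrow> complex"
  shows "exp (lam * s) ^ (4 * CARD('n)) *\<^sub>R LI lam f (Jhat lam zz) (Jhat lam \<zeta>)
      ((exp (lam * s) *\<^sub>R (X - u), (exp (lam * s) *\<^sub>R (Y - v), - s)), (- (exp (lam * s) *\<^sub>R u), - (exp (lam * s) *\<^sub>R v)))
    = LI lam (Sfun lam f) \<zeta> zz ((X, Y, s), (u, v))"
proof -
  define E where "E = exp (lam * s)"
  define Ei where "Ei = exp (- (lam * s))"
  have EEi: "Ei * E = 1" "E * Ei = 1" unfolding E_def Ei_def by (simp_all add: exp_minus)
  have e1: "exp (lam * - s) = Ei" "exp (lam * s) = E"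
    unfolding E_def Ei_def by simp_all
  have e2: "exp (2 * lam * s) = E * E" unfolding E_def by (simp add: exp_add[symmetric])
  have v1: "Ei *\<^sub>R (E *\<^sub>R w) = w" for w :: "real^'n" using EEi by simp
  have v3: "E *\<^sub>R (X - w) - - (E *\<^sub>R w) = E *\<^sub>R X" for w X :: "real^'n"
    by (simp add: scaleR_diff_right)
  have ph: "ebar (eta_lam lam (- s) * beta (- (E *\<^sub>R u)) (E *\<^sub>R Y))
   = ebar (eta_lam lam s * beta u v) * ebar (eta_lam lam s * beta u (Y - v))"
    using phase2 unfolding E_def .
  have Epos: "E > 0" unfolding E_def by simp
  have Ei: "complex_of_real Ei = inverse (complex_of_real E)"
  proof -
    have "Ei = inverse E" unfolding Ei_def E_def by (simp add: exp_minus)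
    then show ?thesis by (simp add: of_real_inverse)
  qed
  show ?thesis
    unfolding LI_def prod.case e1
    unfolding Jhat_apply Sfun_def prod.case e1 e2 v3
    apply (simp only: v1 prod.case ph minus_minus)
    apply (simp add: Ei scaleR_conv_of_real[where 'a=complex])
    using Epos apply (simp add: field_simps)
    apply (simp add: power_mult power4_eq_xxxx mult.assoc)
    done
qed



lemma Lf_S:
  fixes f \<zeta> zz :: "('n::finite) pt \<Rightarrow> complex"
  assumes f: "L1type f" and z: "L2 \<zeta>" "L2 zz"
  shows "ip (Lf lam f (Jhat lam zz)) (Jhat lam \<zeta>) = ip (Lf lam (Sfun lam f) \<zeta>) zz"
proof -
  have [measurable]: "f \<in> borel_measurable borel" using f by (rule L1type_meas)
  have [measurable]: "\<zeta> \<in> borel_measurable borel" "zz \<in> borel_measurable borel" using z by (simp_all add: L2_meas)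
  have intS: "integrable lborel (LI lam f (Jhat lam zz) (Jhat lam \<zeta>))"
    by (rule LI_int[OF f L2_Jhat[OF z(2)] L2_Jhat[OF z(1)]])
  have mS: "LI lam f (Jhat lam zz) (Jhat lam \<zeta>) \<in> borel_measurable borel" by measurable
  define Phi where "Phi = (\<lambda>((X :: real^'n, (Y :: real^'n, s :: real)), (u :: real^'n, v :: real^'n)).
      ((exp (lam * s) *\<^sub>R (X - u), (exp (lam * s) *\<^sub>R (Y - v), - s)), (- (exp (lam * s) *\<^sub>R u), - (exp (lam * s) *\<^sub>R v))))"
  define jP where "jP = (\<lambda>((X :: real^'n, (Y :: real^'n, s :: real)), (u :: real^'n, v :: real^'n)). exp (lam * s) ^ (4 * CARD('n)))"
  have cP: "cv Phi jP" unfolding Phi_def jP_def by (rule cvPhi)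
  have eq: "(\<lambda>w. jP w *\<^sub>R LI lam f (Jhat lam zz) (Jhat lam \<zeta>) (Phi w)) = LI lam (Sfun lam f) \<zeta> zz"
  proof
    fix w :: "'n pt \<times> ((real^'n) \<times> (real^'n))"
    obtain X Y s u v where w: "w = ((X, Y, s), (u, v))" by (cases w) auto
    show "jP w *\<^sub>R LI lam f (Jhat lam zz) (Jhat lam \<zeta>) (Phi w) = LI lam (Sfun lam f) \<zeta> zz w"
      unfolding w Phi_def jP_def prod.case by (rule Lf_pt)
  qed
  have intT: "integrable lborel (LI lam (Sfun lam f) \<zeta> zz)"
    using cv_integral(2)[OF cP mS] intS unfolding eq by simp
  have "ip (Lf lam f (Jhat lam zz)) (Jhat lam \<zeta>) = integral\<^sup>L lborel (LI lam f (Jhat lam zz) (Jhat lam \<zeta>))"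
    by (rule ipLf_eq[OF intS])
  also have "\<dots> = integral\<^sup>L lborel (LI lam (Sfun lam f) \<zeta> zz)"
    using cv_integral(1)[OF cP mS] unfolding eq .
  also have "\<dots> = ip (Lf lam (Sfun lam f) \<zeta>) zz"
    by (rule ipLf_eq[OF intT, symmetric])
  finally show ?thesis .
qed

theorem mainTheorem12:
  fixes lam :: real
  assumes "lam \<noteq> 0"
  shows
   "(\<forall>(\<xi>s :: nat \<Rightarrow> ('n::finite) pt \<Rightarrow> complex) \<eta>s X Xs Y.
       normal_rep \<xi>s \<eta>s \<and> slice_UA lam \<xi>s \<eta>s X \<and> is_adjoint X Xs
       \<and> slice_UA_adj lam \<xi>s \<eta>s Y \<longrightarrow>
       (\<forall>\<zeta> \<zeta>'. L2 \<zeta> \<longrightarrow> L2 \<zeta>' \<longrightarrow> ip (Jhat lam (Xs (Jhat lam \<zeta>))) \<zeta>' = ip (Y \<zeta>) \<zeta>'))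
    \<and> (\<forall>(\<xi> :: 'n pt \<Rightarrow> complex) \<eta> f.
       L2 \<xi> \<and> L2 \<eta> \<and> L1type f
       \<and> (\<forall>\<zeta> \<zeta>'. L2 \<zeta> \<longrightarrow> L2 \<zeta>' \<longrightarrow>
             ip (UA lam (tensor \<xi> \<zeta>)) (tensor \<eta> \<zeta>') = ip (Lf lam f \<zeta>) \<zeta>') \<longrightarrow>
       (\<forall>\<zeta> \<zeta>'. L2 \<zeta> \<longrightarrow> L2 \<zeta>' \<longrightarrow>
             ip (tensor \<xi> \<zeta>) (UA lam (tensor \<eta> \<zeta>')) = ip (Lf lam (Sfun lam f) \<zeta>) \<zeta>'))"
proof (intro conjI allI impI)
  fix \<xi>s :: "nat \<Rightarrow> ('n::finite) pt \<Rightarrow> complex" and \<eta>s X Xs Y and \<zeta> \<zeta>' :: "'n pt \<Rightarrow> complex"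
  assume "normal_rep \<xi>s \<eta>s \<and> slice_UA lam \<xi>s \<eta>s X \<and> is_adjoint X Xs \<and> slice_UA_adj lam \<xi>s \<eta>s Y"
    and "L2 \<zeta>" "L2 \<zeta>'"
  then show "ip (Jhat lam (Xs (Jhat lam \<zeta>))) \<zeta>' = ip (Y \<zeta>) \<zeta>'"
    using part1 by blast
next
  fix \<xi> \<eta> f \<zeta> \<zeta>' :: "'n pt \<Rightarrow> complex"
  assume H: "L2 \<xi> \<and> L2 \<eta> \<and> L1type f \<and> (\<forall>\<zeta> \<zeta>'. L2 \<zeta> \<longrightarrow> L2 \<zeta>' \<longrightarrow>
             ip (UA lam (tensor \<xi> \<zeta>)) (tensor \<eta> \<zeta>') = ip (Lf lam f \<zeta>) \<zeta>')"
    and z: "L2 \<zeta>" "L2 \<zeta>'"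
  have "ip (tensor \<xi> \<zeta>) (UA lam (tensor \<eta> \<zeta>')) = ip (UA lam (tensor \<xi> (Jhat lam \<zeta>'))) (tensor \<eta> (Jhat lam \<zeta>))"
    using star[where a=\<xi> and b=\<eta> and \<zeta>=\<zeta> and zz=\<zeta>' and lam=lam] H z by (simp add: L2_meas)
  also have "\<dots> = ip (Lf lam f (Jhat lam \<zeta>')) (Jhat lam \<zeta>)"
    using H L2_Jhat[OF z(1)] L2_Jhat[OF z(2)] by blast
  also have "\<dots> = ip (Lf lam (Sfun lam f) \<zeta>) \<zeta>'"
    using Lf_S H z by blast
  finally show "ip (tensor \<xi> \<zeta>) (UA lam (tensor \<eta> \<zeta>')) = ip (Lf lam (Sfun lam f) \<zeta>) \<zeta>'" .
qed

end
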